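(* Let $f\in R=D[t;\sigma,\delta]$ be monic of degree $m\ge2$ and irreducible. (i) If $\sigma$ is surjective and $D=\mathrm{Nuc}_r(S_f)$, then $f$ is bounded and $S_f$ is a division algebra. (ii) If $f$ is bounded, then $S_f$ is a division algebra.
   Context: $D$ is an associative division ring, $\sigma$ a ring endomorphism of $D$, $\delta$ a left $\sigma$-derivation. $R=D[t;\sigma,\delta]$ is the skew polynomial ring with $ta=\sigma(a)t+\delta(a)$. For monic $f$ of degree $m$, $S_f$ is the set of polynomials of degree $<m$ with multiplication $g\circ h=$ remainder of $gh$ upon right division by $f$. $\mathrm{Nuc}_r(S_f)=\{x: (yz)x=y(zx)\ \forall y,z\in S_f\}$. $f$ is bounded if there exists $0\neq f^*\in R$ such that $Rf^*=f^*R$ is the largest two-sided ideal of $R$ contained in $Rf$. $f$ irreducible means it is not a unit and has no factorization $f=gh$ with $\deg g,\deg h<\deg f$. $S_f$ is a division algebra if left and right multiplication by every nonzero element are bijective. *)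

theory Defs
  imports "HOL-Computational_Algebra.Polynomial"
begin

text \<open>Skew polynomials D[t;sigma,delta] over a (possibly noncommutative) division ring,
represented by their coefficient sequences (type 'a poly, used only as a carrier of
coefficients: sum_i a_i t^i with coefficients written on the left).
The multiplication is the skew one, determined by t a = sigma(a) t + delta(a).\<close>

definition ring_endo :: "('a::division_ring \<Rightarrow> 'a) \<Rightarrow> bool" where
  "ring_endo \<sigma> \<longleftrightarrow> (\<forall>a b. \<sigma> (a + b) = \<sigma> a + \<sigma> b) \<and> (\<forall>a b. \<sigma> (a * b) = \<sigma> a * \<sigma> b) \<and> \<sigma> 1 = 1"

definition left_sigma_derivation :: "('a::division_ring \<Rightarrow> 'a) \<Rightarrow> ('a \<Rightarrow> 'a) \<Rightarrow> bool" where
  "left_sigma_derivation \<sigma> \<delta> \<longleftrightarrow> (\<forall>a b. \<delta> (a + b) = \<delta> a + \<delta> b) \<and>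
     (\<forall>a b. \<delta> (a * b) = \<sigma> a * \<delta> b + \<delta> a * b)"

definition lsmult :: "'a::division_ring \<Rightarrow> 'a poly \<Rightarrow> 'a poly" where
  "lsmult a p = map_poly (\<lambda>c. a * c) p"

text \<open>t * p, using t a_i t^i = sigma(a_i) t^(i+1) + delta(a_i) t^i\<close>
definition skew_tmul :: "('a::division_ring \<Rightarrow> 'a) \<Rightarrow> ('a \<Rightarrow> 'a) \<Rightarrow> 'a poly \<Rightarrow> 'a poly" where
  "skew_tmul \<sigma> \<delta> p = pCons 0 (map_poly \<sigma> p) + map_poly \<delta> p"

definition skew_mult :: "('a::division_ring \<Rightarrow> 'a) \<Rightarrow> ('a \<Rightarrow> 'a) \<Rightarrow> 'a poly \<Rightarrow> 'a poly \<Rightarrow> 'a poly" where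
  "skew_mult \<sigma> \<delta> p q = (\<Sum>i\<le>degree p. lsmult (coeff p i) ((skew_tmul \<sigma> \<delta> ^^ i) q))"

definition skew_unit :: "('a::division_ring \<Rightarrow> 'a) \<Rightarrow> ('a \<Rightarrow> 'a) \<Rightarrow> 'a poly \<Rightarrow> bool" where
  "skew_unit \<sigma> \<delta> f \<longleftrightarrow> (\<exists>g. skew_mult \<sigma> \<delta> f g = [:1:] \<and> skew_mult \<sigma> \<delta> g f = [:1:])"

definition skew_irreducible :: "('a::division_ring \<Rightarrow> 'a) \<Rightarrow> ('a \<Rightarrow> 'a) \<Rightarrow> 'a poly \<Rightarrow> bool" where
  "skew_irreducible \<sigma> \<delta> f \<longleftrightarrow> \<not> skew_unit \<sigma> \<delta> f \<and>
     \<not> (\<exists>g h. f = skew_mult \<sigma> \<delta> g h \<and> degree g < degree f \<and> degree h < degree f)"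

definition skew_rmod :: "('a::division_ring \<Rightarrow> 'a) \<Rightarrow> ('a \<Rightarrow> 'a) \<Rightarrow> 'a poly \<Rightarrow> 'a poly \<Rightarrow> 'a poly" where
  "skew_rmod \<sigma> \<delta> g f = (THE r. degree r < degree f \<and> (\<exists>q. g = skew_mult \<sigma> \<delta> q f + r))"

definition Sf_carrier :: "'a::division_ring poly \<Rightarrow> 'a poly set" where
  "Sf_carrier f = {g. degree g < degree f}"

definition Sf_mult :: "('a::division_ring \<Rightarrow> 'a) \<Rightarrow> ('a \<Rightarrow> 'a) \<Rightarrow> 'a poly \<Rightarrow> 'a poly \<Rightarrow> 'a poly \<Rightarrow> 'a poly" where
  "Sf_mult \<sigma> \<delta> f g h = skew_rmod \<sigma> \<delta> (skew_mult \<sigma> \<delta> g h) f"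

definition Sf_nuc_r :: "('a::division_ring \<Rightarrow> 'a) \<Rightarrow> ('a \<Rightarrow> 'a) \<Rightarrow> 'a poly \<Rightarrow> 'a poly set" where
  "Sf_nuc_r \<sigma> \<delta> f = {x \<in> Sf_carrier f. \<forall>y\<in>Sf_carrier f. \<forall>z\<in>Sf_carrier f.
      Sf_mult \<sigma> \<delta> f (Sf_mult \<sigma> \<delta> f y z) x = Sf_mult \<sigma> \<delta> f y (Sf_mult \<sigma> \<delta> f z x)}"

definition Sf_division_algebra :: "('a::division_ring \<Rightarrow> 'a) \<Rightarrow> ('a \<Rightarrow> 'a) \<Rightarrow> 'a poly \<Rightarrow> bool" where
  "Sf_division_algebra \<sigma> \<delta> f \<longleftrightarrow> (\<forall>a\<in>Sf_carrier f. a \<noteq> 0 \<longrightarrow>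
      bij_betw (\<lambda>x. Sf_mult \<sigma> \<delta> f a x) (Sf_carrier f) (Sf_carrier f) \<and>
      bij_betw (\<lambda>x. Sf_mult \<sigma> \<delta> f x a) (Sf_carrier f) (Sf_carrier f))"

definition skew_two_sided_ideal :: "('a::division_ring \<Rightarrow> 'a) \<Rightarrow> ('a \<Rightarrow> 'a) \<Rightarrow> 'a poly set \<Rightarrow> bool" where
  "skew_two_sided_ideal \<sigma> \<delta> I \<longleftrightarrow> 0 \<in> I \<and> (\<forall>x\<in>I. \<forall>y\<in>I. x - y \<in> I) \<and>
     (\<forall>x\<in>I. \<forall>r. skew_mult \<sigma> \<delta> r x \<in> I \<and> skew_mult \<sigma> \<delta> x r \<in> I)"

definition skew_left_ideal_gen :: "('a::division_ring \<Rightarrow> 'a) \<Rightarrow> ('a \<Rightarrow> 'a) \<Rightarrow> 'a poly \<Rightarrow> 'a poly set" where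
  "skew_left_ideal_gen \<sigma> \<delta> f = {skew_mult \<sigma> \<delta> g f | g. True}"

definition skew_right_ideal_gen :: "('a::division_ring \<Rightarrow> 'a) \<Rightarrow> ('a \<Rightarrow> 'a) \<Rightarrow> 'a poly \<Rightarrow> 'a poly set" where
  "skew_right_ideal_gen \<sigma> \<delta> f = {skew_mult \<sigma> \<delta> f g | g. True}"

definition skew_bounded :: "('a::division_ring \<Rightarrow> 'a) \<Rightarrow> ('a \<Rightarrow> 'a) \<Rightarrow> 'a poly \<Rightarrow> bool" where
  "skew_bounded \<sigma> \<delta> f \<longleftrightarrow> (\<exists>fs. fs \<noteq> 0 \<and>
     skew_left_ideal_gen \<sigma> \<delta> fs = skew_right_ideal_gen \<sigma> \<delta> fs \<and>
     skew_left_ideal_gen \<sigma> \<delta> fs \<subseteq> skew_left_ideal_gen \<sigma> \<delta> f \<and>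
     (\<forall>I. skew_two_sided_ideal \<sigma> \<delta> I \<and> I \<subseteq> skew_left_ideal_gen \<sigma> \<delta> f \<longrightarrow>
          I \<subseteq> skew_left_ideal_gen \<sigma> \<delta> fs))"

end

theory Submission
  imports Defs
begin


lemma additive_sum:
  fixes h :: "'b::ab_group_add \<Rightarrow> 'c::ab_group_add"
  assumes "\<And>x y. h (x + y) = h x + h y"
  shows "h (sum g A) = (\<Sum>a\<in>A. h (g a))"
proof -
  have h0: "h 0 = 0" using assms[of 0 0] by simp
  show ?thesis
  proof (induction A rule: infinite_finite_induct)
    case (infinite A) then show ?case by (simp add: h0)
  next
    case empty then show ?case by (simp add: h0)
  next
    case (insert x F) then show ?case by (simp add: assms)
  qed
qed

lemma additive_diff:
  fixes h :: "'b::ab_group_add \<Rightarrow> 'c::ab_group_add"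
  assumes "\<And>x y. h (x + y) = h x + h y"
  shows "h (x - y) = h x - h y" and "h 0 = 0" and "h (- x) = - h x"
proof -
  show h0: "h 0 = 0" using assms[of 0 0] by simp
  have n: "h (- z) = - h z" for z
  proof -
    have "h (- z) + h z = 0" using assms[of "-z" z] h0 by simp
    then show ?thesis by (simp add: eq_neg_iff_add_eq_0)
  qed
  then show "h (- x) = - h x" by simp
  show "h (x - y) = h x - h y" using assms[of x "-y"] n[of y] by simp
qed

locale skew =
  fixes \<sigma> \<delta> :: "'a::division_ring \<Rightarrow> 'a"
  assumes endo: "ring_endo \<sigma>" and der: "left_sigma_derivation \<sigma> \<delta>"
begin

abbreviation sm (infixl "\<otimes>" 70) where "p \<otimes> q \<equiv> skew_mult \<sigma> \<delta> p q"
abbreviation T where "T \<equiv> skew_tmul \<sigma> \<delta>"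
abbreviation L where "L \<equiv> lsmult"

lemma sig_add: "\<sigma> (a + b) = \<sigma> a + \<sigma> b" using endo by (simp add: ring_endo_def)
lemma sig_mult: "\<sigma> (a * b) = \<sigma> a * \<sigma> b" using endo by (simp add: ring_endo_def)
lemma sig_1[simp]: "\<sigma> 1 = 1" using endo by (simp add: ring_endo_def)
lemma sig_0[simp]: "\<sigma> 0 = 0" using sig_add[of 0 0] by simp
lemma del_add: "\<delta> (a + b) = \<delta> a + \<delta> b" using der by (simp add: left_sigma_derivation_def)
lemma del_mult: "\<delta> (a * b) = \<sigma> a * \<delta> b + \<delta> a * b" using der by (simp add: left_sigma_derivation_def)
lemma del_0[simp]: "\<delta> 0 = 0" using del_add[of 0 0] by simp
lemma del_1[simp]: "\<delta> 1 = 0" using del_mult[of 1 1] by simp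
lemma sig_inj: "\<sigma> a = 0 \<Longrightarrow> a = 0"
proof (rule ccontr)
  assume h: "\<sigma> a = 0" "a \<noteq> 0"
  have "1 = \<sigma> (a * inverse a)" using h(2) by simp
  also have "\<dots> = \<sigma> a * \<sigma> (inverse a)" by (rule sig_mult)
  finally show False using h(1) by simp
qed
lemma sign_0[simp]: "(\<sigma> ^^ n) 0 = 0" by (induction n) auto
lemma sign_inj: "(\<sigma> ^^ n) a = 0 \<Longrightarrow> a = 0"
  by (induction n arbitrary: a) (auto dest: sig_inj)
lemma sign_nz: "a \<noteq> 0 \<Longrightarrow> (\<sigma> ^^ n) a \<noteq> 0" using sign_inj by blast
lemma sig_nz: "a \<noteq> 0 \<Longrightarrow> \<sigma> a \<noteq> 0" using sig_inj by blast

lemma coeff_T: "coeff (T p) i = (if i = 0 then 0 else \<sigma> (coeff p (i - 1))) + \<delta> (coeff p i)"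
  by (simp add: skew_tmul_def coeff_pCons' coeff_map_poly)
lemma coeff_L: "coeff (L c p) i = c * coeff p i"
  by (simp add: lsmult_def coeff_map_poly)

lemma T_add: "T (p + q) = T p + T q"
  by (rule poly_eqI) (simp add: coeff_T sig_add del_add algebra_simps)
lemma Tn_add: "(T ^^ n) (p + q) = (T ^^ n) p + (T ^^ n) q"
  by (induction n) (auto simp: T_add)
lemma L_add: "L c (p + q) = L c p + L c q"
  by (rule poly_eqI) (simp add: coeff_L algebra_simps)
lemma L_addc: "L (a + b) p = L a p + L b p"
  by (rule poly_eqI) (simp add: coeff_L algebra_simps)
lemma L_mult: "L a (L b p) = L (a * b) p"
  by (rule poly_eqI) (simp add: coeff_L algebra_simps)
lemma L_0[simp]: "L 0 p = 0" by (rule poly_eqI) (simp add: coeff_L)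
lemma L_1[simp]: "L 1 p = p" by (rule poly_eqI) (simp add: coeff_L)
lemma L_0r[simp]: "L c 0 = 0" by (rule poly_eqI) (simp add: coeff_L)
lemma T_0[simp]: "T 0 = 0" by (rule poly_eqI) (simp add: coeff_T)
lemma Tn_0[simp]: "(T ^^ n) 0 = 0" by (induction n) auto

lemma TL: "T (L c x) = L (\<sigma> c) (T x) + L (\<delta> c) x"
  by (rule poly_eqI) (simp add: coeff_T coeff_L sig_mult del_mult algebra_simps)

lemma mult_alt:
  assumes "degree p \<le> N"
  shows "p \<otimes> q = (\<Sum>i\<le>N. L (coeff p i) ((T ^^ i) q))"
  unfolding skew_mult_def
  by (rule sum.mono_neutral_left) (use assms in \<open>auto simp: coeff_eq_0\<close>)

lemma mult_add_right: "p \<otimes> (q1 + q2) = p \<otimes> q1 + p \<otimes> q2"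
  by (simp add: skew_mult_def Tn_add L_add sum.distrib)

lemma mult_add_left: "(p1 + p2) \<otimes> q = p1 \<otimes> q + p2 \<otimes> q"
proof -
  let ?N = "max (degree p1) (degree p2)"
  have "degree (p1 + p2) \<le> ?N" by (rule degree_add_le_max)
  then show ?thesis
    by (simp add: mult_alt[of _ ?N] L_addc sum.distrib)
qed

lemmas mr = additive_diff[where h="\<lambda>q. p \<otimes> q" for p, OF mult_add_right]
lemmas ml = additive_diff[where h="\<lambda>p. p \<otimes> q" for q, OF mult_add_left]

lemma mult_sum_left: "(sum g A) \<otimes> q = (\<Sum>a\<in>A. g a \<otimes> q)"
  by (rule additive_sum[where h="\<lambda>p. p \<otimes> q"], rule mult_add_left)
lemma mult_sum_right: "q \<otimes> (sum g A) = (\<Sum>a\<in>A. q \<otimes> g a)"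
  by (rule additive_sum[where h="\<lambda>p. q \<otimes> p"], rule mult_add_right)
lemma L_sum: "L c (sum g A) = (\<Sum>a\<in>A. L c (g a))"
  by (rule additive_sum[where h="\<lambda>p. L c p"], rule L_add)
lemma T_sum: "T (sum g A) = (\<Sum>a\<in>A. T (g a))"
  by (rule additive_sum[where h="\<lambda>p. T p"], rule T_add)

lemma degree_L: "degree (L c p) \<le> degree p"
  by (rule degree_le) (simp add: coeff_L coeff_eq_0)

lemma mult_L_left: "(L c p) \<otimes> q = L c (p \<otimes> q)"
proof -
  have "(L c p) \<otimes> q = (\<Sum>i\<le>degree p. L (coeff (L c p) i) ((T ^^ i) q))"
    by (rule mult_alt[OF degree_L])
  also have "\<dots> = L c (p \<otimes> q)"
    by (simp add: skew_mult_def[of _ _ p q] coeff_L L_mult L_sum)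
  finally show ?thesis .
qed

lemma mult_monom: "monom c i \<otimes> q = L c ((T ^^ i) q)"
proof -
  have "degree (monom c i) \<le> i" by (simp add: degree_monom_le)
  then have "monom c i \<otimes> q = (\<Sum>j\<le>i. L (coeff (monom c i) j) ((T ^^ j) q))" by (rule mult_alt)
  also have "\<dots> = L c ((T ^^ i) q)"
    by (subst sum.remove[of _ i]) auto
  finally show ?thesis .
qed

lemma degree_T: "degree (T p) \<le> Suc (degree p)"
  by (rule degree_le) (auto simp: coeff_T coeff_eq_0)

lemma mult_T_left: "(T p) \<otimes> q = T (p \<otimes> q)"
proof -
  let ?n = "degree p"
  have 1: "T p \<otimes> q = (\<Sum>i\<le>Suc ?n. L (coeff (T p) i) ((T ^^ i) q))"
    by (rule mult_alt[OF degree_T])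
  also have "\<dots> = (\<Sum>i\<le>Suc ?n. L (if i = 0 then 0 else \<sigma> (coeff p (i - 1))) ((T ^^ i) q))
                 + (\<Sum>i\<le>Suc ?n. L (\<delta> (coeff p i)) ((T ^^ i) q))"
    by (simp add: coeff_T L_addc sum.distrib)
  also have "(\<Sum>i\<le>Suc ?n. L (if i = 0 then 0 else \<sigma> (coeff p (i - 1))) ((T ^^ i) q))
      = (\<Sum>i\<le>?n. L (\<sigma> (coeff p i)) ((T ^^ Suc i) q))"
    by (subst sum.atMost_Suc_shift) simp
  also have "(\<Sum>i\<le>Suc ?n. L (\<delta> (coeff p i)) ((T ^^ i) q)) = (\<Sum>i\<le>?n. L (\<delta> (coeff p i)) ((T ^^ i) q))"
    by (simp add: coeff_eq_0)
  finally have A: "T p \<otimes> q = (\<Sum>i\<le>?n. L (\<sigma> (coeff p i)) ((T ^^ Suc i) q)) + (\<Sum>i\<le>?n. L (\<delta> (coeff p i)) ((T ^^ i) q))" .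
  have "T (p \<otimes> q) = (\<Sum>i\<le>?n. T (L (coeff p i) ((T ^^ i) q)))"
    by (simp add: skew_mult_def T_sum)
  also have "\<dots> = (\<Sum>i\<le>?n. L (\<sigma> (coeff p i)) ((T ^^ Suc i) q)) + (\<Sum>i\<le>?n. L (\<delta> (coeff p i)) ((T ^^ i) q))"
    by (simp add: TL sum.distrib)
  finally show ?thesis using A by simp
qed

lemma mult_Tn_left: "((T ^^ n) p) \<otimes> q = (T ^^ n) (p \<otimes> q)"
  by (induction n) (auto simp: mult_T_left)

lemma mult_assoc: "(p \<otimes> q) \<otimes> r = p \<otimes> (q \<otimes> r)"
proof -
  have "(p \<otimes> q) \<otimes> r = (\<Sum>i\<le>degree p. L (coeff p i) ((T ^^ i) q)) \<otimes> r"
    by (simp add: skew_mult_def)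
  also have "\<dots> = (\<Sum>i\<le>degree p. L (coeff p i) ((T ^^ i) (q \<otimes> r)))"
    by (simp add: mult_sum_left mult_L_left mult_Tn_left)
  finally show ?thesis by (simp add: skew_mult_def)
qed

lemma T_monom1: "T (monom 1 i) = monom 1 (Suc i)"
  by (rule poly_eqI) (auto simp: coeff_T)
lemma Tn_1: "(T ^^ i) [:1:] = monom 1 i"
  by (induction i) (auto simp: T_monom1 monom_0)
lemma Tn_monom1: "(T ^^ i) (monom 1 j) = monom 1 (i + j)"
  by (induction i) (auto simp: T_monom1)
lemma L_monom: "L c (monom d i) = monom (c * d) i"
  by (rule poly_eqI) (simp add: coeff_L)

lemma mult_1_right[simp]: "p \<otimes> [:1:] = p"
  by (simp add: skew_mult_def Tn_1 L_monom poly_as_sum_of_monoms)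
lemma mult_1_left[simp]: "[:1:] \<otimes> p = p"
  by (simp add: skew_mult_def)
lemma mult_const: "[:c:] \<otimes> p = L c p"
  using mult_monom[of c 0 p] by (simp add: monom_0)
lemma mult_0_left[simp]: "0 \<otimes> p = 0" by (simp add: skew_mult_def)
lemma mult_0_right[simp]: "p \<otimes> 0 = 0" by (simp add: skew_mult_def)


lemma degree_Tn_le: "degree ((T ^^ n) p) \<le> degree p + n"
proof (induction n)
  case (Suc n) then show ?case using degree_T[of "(T ^^ n) p"] by simp
qed simp

lemma T_lead: assumes "p \<noteq> 0"
  shows "degree (T p) = Suc (degree p) \<and> coeff (T p) (Suc (degree p)) = \<sigma> (lead_coeff p)"
proof -
  have c: "coeff (T p) (Suc (degree p)) = \<sigma> (lead_coeff p)"
    by (simp add: coeff_T coeff_eq_0)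
  moreover have "\<sigma> (lead_coeff p) \<noteq> 0" using assms by (simp add: sig_nz)
  ultimately have "Suc (degree p) \<le> degree (T p)" by (metis le_degree)
  with degree_T[of p] c show ?thesis by simp
qed

lemma Tn_lead: assumes "p \<noteq> 0"
  shows "degree ((T ^^ n) p) = degree p + n \<and> coeff ((T ^^ n) p) (degree p + n) = (\<sigma> ^^ n) (lead_coeff p)"
proof (induction n)
  case (Suc n)
  have "(\<sigma> ^^ n) (lead_coeff p) \<noteq> 0" using assms by (simp add: sign_nz)
  then have "(T ^^ n) p \<noteq> 0" using Suc by auto
  from T_lead[OF this] Suc show ?case by simp
qed simp

lemma degree_mult_le: "degree (p \<otimes> q) \<le> degree p + degree q"
  unfolding skew_mult_def
proof (rule degree_sum_le)
  fix i assume "i \<in> {..degree p}"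
  then show "degree (L (coeff p i) ((T ^^ i) q)) \<le> degree p + degree q"
    using degree_L[of "coeff p i" "(T ^^ i) q"] degree_Tn_le[of i q] by auto
qed simp

lemma coeff_mult_top:
  "coeff (p \<otimes> q) (degree p + degree q) = lead_coeff p * (\<sigma> ^^ degree p) (lead_coeff q)"
proof (cases "q = 0")
  case True then show ?thesis by simp
next
  case False
  have "coeff (p \<otimes> q) (degree p + degree q) = (\<Sum>i<Suc (degree p). coeff p i * coeff ((T ^^ i) q) (degree p + degree q))"
    by (simp add: skew_mult_def coeff_sum coeff_L lessThan_Suc_atMost)
  also have "\<dots> = lead_coeff p * coeff ((T ^^ degree p) q) (degree p + degree q)"
  proof -
    have "coeff ((T ^^ i) q) (degree p + degree q) = 0" if "i < degree p" for i
      using degree_Tn_le[of i q] that by (intro coeff_eq_0) simp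
    then show ?thesis by (simp add: sum.lessThan_Suc)
  qed
  also have "\<dots> = lead_coeff p * (\<sigma> ^^ degree p) (lead_coeff q)"
    using Tn_lead[OF False, of "degree p"] by (simp add: add.commute)
  finally show ?thesis .
qed

lemma deg_mult: assumes "p \<noteq> 0" "q \<noteq> 0"
  shows "degree (p \<otimes> q) = degree p + degree q" and "lead_coeff (p \<otimes> q) = lead_coeff p * (\<sigma> ^^ degree p) (lead_coeff q)"
    and "p \<otimes> q \<noteq> 0"
proof -
  have nz: "lead_coeff p * (\<sigma> ^^ degree p) (lead_coeff q) \<noteq> 0"
    using assms by (simp add: sign_nz)
  then have "degree p + degree q \<le> degree (p \<otimes> q)" using coeff_mult_top by (metis le_degree)
  then show d: "degree (p \<otimes> q) = degree p + degree q" using degree_mult_le by (meson antisym)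
  then show "lead_coeff (p \<otimes> q) = lead_coeff p * (\<sigma> ^^ degree p) (lead_coeff q)" using coeff_mult_top by simp
  then show "p \<otimes> q \<noteq> 0" using nz by auto
qed

lemma mult_eq_0: "p \<otimes> q = 0 \<longleftrightarrow> p = 0 \<or> q = 0"
  using deg_mult(3) by auto

lemma lower:
  fixes p s :: "'a poly"
  assumes "degree p = n" "degree s = n" "lead_coeff p = lead_coeff s"
  shows "p - s = 0 \<or> degree (p - s) < n"
proof (rule ccontr)
  assume "\<not> ?thesis"
  then have nz: "p - s \<noteq> 0" and ge: "degree (p - s) \<ge> n" by auto
  have "degree (p - s) \<le> n" by (rule degree_diff_le) (simp_all add: assms)
  with ge have "degree (p - s) = n" by simp
  moreover have "coeff (p - s) n = 0" using assms by simp
  ultimately show False using nz by (metis leading_coeff_0_iff)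
qed

lemma rdiv: assumes "h \<noteq> 0"
  shows "\<exists>q r. g = q \<otimes> h + r \<and> (r = 0 \<or> degree r < degree h)"
proof (induction "degree g" arbitrary: g rule: less_induct)
  case less
  show ?case
  proof (cases "g = 0 \<or> degree g < degree h")
    case True then show ?thesis by (intro exI[of _ 0] exI[of _ g]) auto
  next
    case False
    then have gnz: "g \<noteq> 0" and ge: "degree h \<le> degree g" by auto
    define k where "k = degree g - degree h"
    define b where "b = lead_coeff g * inverse ((\<sigma> ^^ k) (lead_coeff h))"
    have hk: "(\<sigma> ^^ k) (lead_coeff h) \<noteq> 0" using assms by (simp add: sign_nz)
    have bnz: "b \<noteq> 0" using gnz hk by (simp add: b_def)
    have dm: "degree (monom b k) = k" "lead_coeff (monom b k) = b" using bnz by (auto simp: degree_monom_eq)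
    have mnz: "monom b k \<noteq> 0" using bnz by simp
    let ?s = "monom b k \<otimes> h"
    have ds: "degree ?s = degree g" using deg_mult(1)[OF mnz assms] dm ge k_def by simp
    have ls: "lead_coeff ?s = lead_coeff g" using deg_mult(2)[OF mnz assms] dm hk
      by (simp add: b_def mult.assoc)
    have "g - ?s = 0 \<or> degree (g - ?s) < degree g" using lower[OF refl ds ls[symmetric]] .
    then show ?thesis
    proof
      assume "g - ?s = 0"
      then show ?thesis by (intro exI[of _ "monom b k"] exI[of _ 0]) simp
    next
      assume "degree (g - ?s) < degree g"
      from less[OF this] obtain q r where qr: "g - ?s = q \<otimes> h + r" "r = 0 \<or> degree r < degree h" by blast
      have "g = (q + monom b k) \<otimes> h + r" using qr(1) by (simp add: mult_add_left algebra_simps)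
      then show ?thesis using qr(2) by blast
    qed
  qed
qed

lemma surj_pow: assumes "surj \<sigma>" shows "\<exists>b. (\<sigma> ^^ n) b = c"
proof (induction n arbitrary: c)
  case 0 then show ?case by simp
next
  case (Suc n)
  obtain a where "\<sigma> a = c" using assms by (metis surjD)
  moreover obtain b where "(\<sigma> ^^ n) b = a" using Suc by blast
  ultimately show ?case by auto
qed

lemma ldiv: assumes "surj \<sigma>" "g \<noteq> 0"
  shows "\<exists>q r. x = g \<otimes> q + r \<and> (r = 0 \<or> degree r < degree g)"
proof (induction "degree x" arbitrary: x rule: less_induct)
  case less
  show ?case
  proof (cases "x = 0 \<or> degree x < degree g")
    case True then show ?thesis by (intro exI[of _ 0] exI[of _ x]) auto
  next
    case False
    then have xnz: "x \<noteq> 0" and ge: "degree g \<le> degree x" by auto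
    define k where "k = degree x - degree g"
    obtain b where b: "(\<sigma> ^^ degree g) b = inverse (lead_coeff g) * lead_coeff x"
      using surj_pow[OF assms(1)] by blast
    have bnz: "b \<noteq> 0" using b xnz assms(2) by auto
    have dm: "degree (monom b k) = k" "lead_coeff (monom b k) = b" using bnz by (auto simp: degree_monom_eq)
    have mnz: "monom b k \<noteq> 0" using bnz by simp
    let ?s = "g \<otimes> monom b k"
    have ds: "degree ?s = degree x" using deg_mult(1)[OF assms(2) mnz] dm ge k_def by simp
    have ls: "lead_coeff ?s = lead_coeff x" using deg_mult(2)[OF assms(2) mnz] dm b assms(2)
      by (simp add: mult.assoc[symmetric])
    have "x - ?s = 0 \<or> degree (x - ?s) < degree x" using lower[OF refl ds ls[symmetric]] .
    then show ?thesis
    proof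
      assume "x - ?s = 0"
      then show ?thesis by (intro exI[of _ "monom b k"] exI[of _ 0]) simp
    next
      assume "degree (x - ?s) < degree x"
      from less[OF this] obtain q r where qr: "x - ?s = g \<otimes> q + r" "r = 0 \<or> degree r < degree g" by blast
      have "x = g \<otimes> (q + monom b k) + r" using qr(1) by (simp add: mult_add_right algebra_simps)
      then show ?thesis using qr(2) by blast
    qed
  qed
qed

end


lemma LA:
  fixes v :: "nat \<Rightarrow> nat \<Rightarrow> 'a::division_ring"
  assumes "finite K" "card K > n" "\<forall>k\<in>K. \<forall>i\<ge>n. v k i = 0"
  shows "\<exists>c. (\<exists>k\<in>K. c k \<noteq> 0) \<and> (\<forall>i. (\<Sum>k\<in>K. c k * v k i) = 0)"
  using assms
proof (induction n arbitrary: K v)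
  case 0
  then obtain k where "k \<in> K" by fastforce
  with 0 show ?case by (intro exI[of _ "\<lambda>_. 1"]) auto
next
  case (Suc n)
  show ?case
  proof (cases "\<forall>k\<in>K. v k n = 0")
    case True
    then have "\<forall>k\<in>K. \<forall>i\<ge>n. v k i = 0" using Suc.prems(3)
      by (metis le_antisym not_less_eq_eq)
    then show ?thesis using Suc.IH[of K v] Suc.prems by auto
  next
    case False
    then obtain p where p: "p \<in> K" "v p n \<noteq> 0" by blast
    define K' where "K' = K - {p}"
    have fK': "finite K'" using Suc.prems by (simp add: K'_def)
    have cK': "card K' > n" using Suc.prems p by (simp add: K'_def)
    define w where "w k i = v k i - (v k n * inverse (v p n)) * v p i" for k i
    have "\<forall>k\<in>K'. \<forall>i\<ge>n. w k i = 0"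
    proof (intro ballI allI impI)
      fix k i assume k: "k \<in> K'" and i: "n \<le> i"
      show "w k i = 0"
      proof (cases "i = n")
        case True then show ?thesis using p by (simp add: w_def mult.assoc)
      next
        case False
        then have "Suc n \<le> i" using i by simp
        then show ?thesis using Suc.prems(3) k p by (simp add: w_def K'_def)
      qed
    qed
    from Suc.IH[OF fK' cK' this] obtain c where
      c: "\<exists>k\<in>K'. c k \<noteq> 0" "\<forall>i. (\<Sum>k\<in>K'. c k * w k i) = 0" by blast
    define s where "s = (\<Sum>k\<in>K'. c k * v k n) * inverse (v p n)"
    define c' where "c' = c(p := - s)"
    have sK: "(\<Sum>k\<in>K. g k) = g p + (\<Sum>k\<in>K'. g k)" for g :: "nat \<Rightarrow> 'a"
      using Suc.prems(1) p by (simp add: K'_def sum.remove)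
    have "(\<Sum>k\<in>K. c' k * v k i) = 0" for i
    proof -
      have "(\<Sum>k\<in>K. c' k * v k i) = - s * v p i + (\<Sum>k\<in>K'. c k * v k i)"
        by (simp add: sK c'_def K'_def)
      also have "(\<Sum>k\<in>K'. c k * v k i) = (\<Sum>k\<in>K'. c k * w k i) + (\<Sum>k\<in>K'. c k * (v k n * inverse (v p n)) * v p i)"
        by (simp add: w_def right_diff_distrib sum_subtractf mult.assoc)
      also have "(\<Sum>k\<in>K'. c k * (v k n * inverse (v p n)) * v p i) = s * v p i"
        by (simp add: s_def sum_distrib_right mult.assoc)
      finally show ?thesis using c(2) by simp
    qed
    moreover have "\<exists>k\<in>K. c' k \<noteq> 0" using c(1) by (auto simp: c'_def K'_def)
    ultimately show ?thesis by blast
  qed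
qed



definition V :: "nat \<Rightarrow> 'a::zero poly set" where "V n = {p. \<forall>i\<ge>n. coeff p i = 0}"

lemma V_iff: assumes n: "0 < n" shows "p \<in> V n \<longleftrightarrow> degree p < n"
  unfolding V_def mem_Collect_eq
proof
  assume a: "\<forall>i\<ge>n. coeff p i = 0"
  show "degree p < n"
  proof (rule ccontr)
    assume b: "\<not> degree p < n"
    then have "coeff p (degree p) = 0" using a by simp
    then have "p = 0" by simp
    then show False using n b by simp
  qed
qed (auto simp: coeff_eq_0)

lemma V_deg: "p \<in> V n \<Longrightarrow> p = 0 \<or> degree p < n"
proof (rule ccontr)
  assume a: "p \<in> V n" "\<not> (p = 0 \<or> degree p < n)"
  then have "coeff p (degree p) = 0" by (simp add: V_def)
  then show False using a by simp
qed

lemma V_I: "p = 0 \<or> degree p < n \<Longrightarrow> p \<in> V n"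
  unfolding V_def by (auto simp: coeff_eq_0)

context skew begin

definition lin :: "('a poly \<Rightarrow> 'a poly) \<Rightarrow> bool" where
  "lin \<phi> \<longleftrightarrow> (\<forall>x y. \<phi> (x + y) = \<phi> x + \<phi> y) \<and> (\<forall>c x. \<phi> (L c x) = L c (\<phi> x))"

lemma lin_sum: assumes "lin \<phi>"
  shows "\<phi> (\<Sum>k\<in>K. L (c k) (u k)) = (\<Sum>k\<in>K. L (c k) (\<phi> (u k)))"
proof -
  have "\<phi> (\<Sum>k\<in>K. L (c k) (u k)) = (\<Sum>k\<in>K. \<phi> (L (c k) (u k)))"
    by (rule additive_sum) (use assms in \<open>simp add: lin_def\<close>)
  then show ?thesis using assms by (simp add: lin_def)
qed

lemma lin_0: "lin \<phi> \<Longrightarrow> \<phi> 0 = 0"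
  unfolding lin_def by (metis additive_diff(2))

lemma L_V: "x \<in> V n \<Longrightarrow> L c x \<in> V n"
  by (simp add: V_def coeff_L)

lemma sum_V: "(\<And>k. k \<in> K \<Longrightarrow> u k \<in> V n) \<Longrightarrow> (\<Sum>k\<in>K. u k) \<in> V n"
  by (induction K rule: infinite_finite_induct) (auto simp: V_def)

lemma coeff_comb_monom:
  assumes "finite K" "j \<in> K"
  shows "coeff (\<Sum>k\<in>K. L (c k) (monom 1 k)) j = c j"
proof -
  have "coeff (\<Sum>k\<in>K. L (c k) (monom 1 k)) j = (\<Sum>k\<in>K. if k = j then c k else 0)"
    by (auto simp: coeff_sum coeff_L intro!: sum.cong)
  also have "\<dots> = c j" using assms by (simp add: sum.delta)
  finally show ?thesis .
qed

lemma DIM1: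
  assumes "lin \<phi>" and pre: "\<forall>i<n. \<exists>u\<in>V p. \<phi> u = monom 1 i"
  shows "n \<le> p"
proof (rule ccontr)
  assume "\<not> n \<le> p"
  from pre obtain u where u: "\<forall>i<n. u i \<in> V p \<and> \<phi> (u i) = monom 1 i" by metis
  have "\<forall>k\<in>{..<n}. \<forall>i\<ge>p. coeff (u k) i = 0" using u by (auto simp: V_def)
  from LA[OF _ _ this] \<open>\<not> n \<le> p\<close> obtain c where
    c: "\<exists>k\<in>{..<n}. c k \<noteq> 0" "\<forall>i. (\<Sum>k\<in>{..<n}. c k * coeff (u k) i) = 0" by auto
  have "(\<Sum>k\<in>{..<n}. L (c k) (u k)) = 0"
    by (rule poly_eqI) (simp add: coeff_sum coeff_L c(2))
  then have "\<phi> (\<Sum>k\<in>{..<n}. L (c k) (u k)) = 0" using lin_0[OF assms(1)] by simp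
  then have z: "(\<Sum>k\<in>{..<n}. L (c k) (monom 1 k)) = 0" using u by (simp add: lin_sum[OF assms(1)])
  from c(1) obtain j where j: "j < n" "c j \<noteq> 0" by auto
  have "coeff (\<Sum>k\<in>{..<n}. L (c k) (monom 1 k)) j = c j" using j by (intro coeff_comb_monom) auto
  with z j show False by simp
qed

lemma DIM2:
  assumes "lin \<phi>" and into: "\<forall>x\<in>V n. \<phi> x \<in> V n" and inj: "\<forall>x\<in>V n. \<phi> x = 0 \<longrightarrow> x = 0"
    and b: "b \<in> V n"
  shows "\<exists>x\<in>V n. \<phi> x = b"
proof (rule ccontr)
  assume nb: "\<not> ?thesis"
  define u where "u k = (if k < n then \<phi> (monom 1 k) else b)" for k
  have uV: "u k \<in> V n" for k
    using into b by (auto simp: u_def V_def)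
  have "\<forall>k\<in>{..n}. \<forall>i\<ge>n. coeff (u k) i = 0" using uV by (auto simp: V_def)
  from LA[OF _ _ this] obtain c where
    c: "\<exists>k\<in>{..n}. c k \<noteq> 0" "\<forall>i. (\<Sum>k\<in>{..n}. c k * coeff (u k) i) = 0" by auto
  define y where "y = (\<Sum>k\<in>{..<n}. L (c k) (monom 1 k))"
  have yV: "y \<in> V n" unfolding y_def by (rule sum_V) (auto intro!: L_V simp: V_def coeff_L)
  have "(\<Sum>k\<in>{..n}. L (c k) (u k)) = 0"
    by (rule poly_eqI) (simp add: coeff_sum coeff_L c(2))
  also have "(\<Sum>k\<in>{..n}. L (c k) (u k)) = (\<Sum>k\<in>{..<n}. L (c k) (u k)) + L (c n) b"
    by (simp add: lessThan_Suc_atMost[symmetric] u_def)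
  also have "(\<Sum>k\<in>{..<n}. L (c k) (u k)) = \<phi> y"
    by (simp add: y_def lin_sum[OF assms(1)] u_def)
  finally have e: "\<phi> y + L (c n) b = 0" .
  show False
  proof (cases "c n = 0")
    case True
    then have "\<phi> y = 0" using e by simp
    then have "y = 0" using inj yV by blast
    moreover from c(1) True obtain j where j: "j < n" "c j \<noteq> 0"
      by (metis atMost_iff le_neq_implies_less)
    moreover have "coeff y j = c j" unfolding y_def using j by (intro coeff_comb_monom) auto
    ultimately show False by simp
  next
    case False
    have "L (inverse (c n)) (L (c n) b) = b" using False by (simp add: L_mult)
    also have "L (c n) b = - \<phi> y" using e by (simp add: eq_neg_iff_add_eq_0 add.commute)
    also have "L (inverse (c n)) (- \<phi> y) = \<phi> (L (- inverse (c n)) y)"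
      using assms(1) by (simp add: lin_def coeff_L poly_eq_iff)
    finally show False using nb L_V[OF yV] by blast
  qed
qed

lemma left_ideal_gen:
  assumes sub: "\<forall>x\<in>I. \<forall>y\<in>I. x - y \<in> I" and lm: "\<forall>x\<in>I. \<forall>r. r \<otimes> x \<in> I"
    and h: "h \<in> I" "h \<noteq> 0" "\<forall>x\<in>I. x \<noteq> 0 \<longrightarrow> degree h \<le> degree x"
    and x: "x \<in> I"
  shows "\<exists>w. x = w \<otimes> h"
proof -
  obtain w r where wr: "x = w \<otimes> h + r" "r = 0 \<or> degree r < degree h" using rdiv[OF h(2)] by blast
  have "r = x - w \<otimes> h" using wr by simp
  then have "r \<in> I" using sub lm x h(1) by simp
  then have "r = 0" using wr(2) h(3) by force
  with wr show ?thesis by auto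
qed

lemma right_ideal_gen:
  assumes "surj \<sigma>" and sub: "\<forall>x\<in>I. \<forall>y\<in>I. x - y \<in> I" and rm: "\<forall>x\<in>I. \<forall>r. x \<otimes> r \<in> I"
    and h: "h \<in> I" "h \<noteq> 0" "\<forall>x\<in>I. x \<noteq> 0 \<longrightarrow> degree h \<le> degree x"
    and x: "x \<in> I"
  shows "\<exists>w. x = h \<otimes> w"
proof -
  obtain w r where wr: "x = h \<otimes> w + r" "r = 0 \<or> degree r < degree h" using ldiv[OF assms(1) h(2)] by blast
  have "r = x - h \<otimes> w" using wr by simp
  then have "r \<in> I" using sub rm x h(1) by simp
  then have "r = 0" using wr(2) h(3) by force
  with wr show ?thesis by auto
qed

lemma min_elem:
  assumes "y \<in> I" "y \<noteq> 0"
  shows "\<exists>h. h \<in> I \<and> h \<noteq> 0 \<and> (\<forall>x\<in>I. x \<noteq> 0 \<longrightarrow> degree h \<le> degree x)"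
  using ex_has_least_nat[of "\<lambda>x. x \<in> I \<and> x \<noteq> 0" y degree] assms by blast

end

locale skewf = skew +
  fixes f :: "'a poly"
  assumes monic: "lead_coeff f = 1" and deg2: "degree f \<ge> 2" and irr: "skew_irreducible \<sigma> \<delta> f"
begin

abbreviation m where "m \<equiv> degree f"
abbreviation rmod where "rmod g \<equiv> skew_rmod \<sigma> \<delta> g f"

lemma fnz: "f \<noteq> 0" using deg2 by auto
lemma mpos: "0 < m" using deg2 by simp

lemma rmod_unique:
  assumes "q1 \<otimes> f + r1 = q2 \<otimes> f + r2" "degree r1 < m" "degree r2 < m"
  shows "r1 = r2"
proof (rule ccontr)
  assume ne: "r1 \<noteq> r2"
  have e: "(q1 - q2) \<otimes> f = r2 - r1" using assms(1) by (simp add: ml algebra_simps)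
  then have "q1 - q2 \<noteq> 0" using ne by auto
  then have "degree ((q1 - q2) \<otimes> f) \<ge> m" using deg_mult(1)[OF _ fnz] by simp
  moreover have "degree (r2 - r1) < m" using assms by (intro degree_diff_less)
  ultimately show False using e by simp
qed

lemma rmod_prop: "degree (rmod g) < m \<and> (\<exists>q. g = q \<otimes> f + rmod g)"
proof -
  obtain q r where qr: "g = q \<otimes> f + r" "r = 0 \<or> degree r < m" using rdiv[OF fnz] by blast
  then have d: "degree r < m" using mpos by auto
  have "skew_rmod \<sigma> \<delta> g f = r"
    unfolding skew_rmod_def
  proof (rule the_equality)
    show "degree r < m \<and> (\<exists>q. g = q \<otimes> f + r)" using qr d by blast
  next
    fix r' assume a: "degree r' < m \<and> (\<exists>q. g = q \<otimes> f + r')"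
    then obtain q' where "g = q' \<otimes> f + r'" by blast
    then show "r' = r" using rmod_unique[of q' r' q r] qr(1) a d by simp
  qed
  then show ?thesis using qr d by blast
qed

lemma rmod_eq: assumes "g = q \<otimes> f + r" "degree r < m" shows "rmod g = r"
proof -
  obtain q' where "g = q' \<otimes> f + rmod g" using rmod_prop by blast
  then show ?thesis using rmod_unique[of q' "rmod g" q r] assms rmod_prop[of g] by simp
qed

lemma rmod_deg: "degree (rmod g) < m" using rmod_prop by blast
lemma rmod_V: "rmod g \<in> V m" using rmod_deg V_iff mpos by blast

lemma rmod_small: "degree g < m \<Longrightarrow> rmod g = g"
  using rmod_eq[of g 0 g] by simp

lemma rmod_add: "rmod (x + y) = rmod x + rmod y"
proof -
  obtain q1 q2 where "x = q1 \<otimes> f + rmod x" "y = q2 \<otimes> f + rmod y" using rmod_prop by metis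
  then have "x + y = (q1 + q2) \<otimes> f + (rmod x + rmod y)" by (metis (no_types) mult_add_left add.assoc add.left_commute)
  then show ?thesis by (rule rmod_eq) (simp add: rmod_deg degree_add_less)
qed

lemmas rmod_d = additive_diff[where h="\<lambda>x. rmod x", OF rmod_add]

lemma rmod_sum: "rmod (sum g A) = (\<Sum>a\<in>A. rmod (g a))"
  by (rule additive_sum[where h="\<lambda>x. rmod x"], rule rmod_add)

lemma rmod_L: "rmod (L c x) = L c (rmod x)"
proof -
  obtain q where "x = q \<otimes> f + rmod x" using rmod_prop by metis
  then have "L c x = (L c q) \<otimes> f + L c (rmod x)" by (metis L_add mult_L_left)
  moreover have "degree (L c (rmod x)) < m" using degree_L[of c "rmod x"] rmod_deg[of x] by linarith
  ultimately show ?thesis by (rule rmod_eq)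
qed

lemma rmod_qf: "rmod (q \<otimes> f) = 0" using rmod_eq[of "q \<otimes> f" q 0] mpos by simp

lemma inRf: "rmod x = 0 \<longleftrightarrow> (\<exists>q. x = q \<otimes> f)"
proof
  assume "rmod x = 0" then show "\<exists>q. x = q \<otimes> f" using rmod_prop[of x] by auto
qed (auto simp: rmod_qf)

lemma rmod_left: "rmod x = 0 \<Longrightarrow> rmod (r \<otimes> x) = 0"
proof -
  assume "rmod x = 0"
  then obtain q where "x = q \<otimes> f" using inRf by blast
  then have "r \<otimes> x = (r \<otimes> q) \<otimes> f" by (simp add: mult_assoc)
  then show ?thesis by (simp add: rmod_qf)
qed

lemma rmod_mult_right: "rmod (x \<otimes> rmod y) = rmod (x \<otimes> y)"
proof -
  obtain q where "y = q \<otimes> f + rmod y" using rmod_prop by metis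
  then have "x \<otimes> y = (x \<otimes> q) \<otimes> f + x \<otimes> rmod y" by (metis mult_add_right mult_assoc)
  then show ?thesis by (simp add: rmod_add rmod_qf)
qed

lemma rmod_plus_qf: "rmod (q \<otimes> f + r) = rmod r" by (simp add: rmod_add rmod_qf)

lemma carrier_V: "Sf_carrier f = V m" using V_iff mpos by (auto simp: Sf_carrier_def)

lemma irr': "f = g \<otimes> h \<Longrightarrow> \<not> (degree g < m \<and> degree h < m)"
  using irr by (auto simp: skew_irreducible_def)

lemma bezout:
  assumes "z \<noteq> 0" "degree z < m"
  shows "\<exists>p q. [:1:] = p \<otimes> z + q \<otimes> f"
proof -
  define I where "I = {p \<otimes> z + q \<otimes> f | p q. True}"
  have sub: "\<forall>x\<in>I. \<forall>y\<in>I. x - y \<in> I"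
  proof (intro ballI)
    fix x y assume "x \<in> I" "y \<in> I"
    then obtain p1 q1 p2 q2 where "x = p1 \<otimes> z + q1 \<otimes> f" "y = p2 \<otimes> z + q2 \<otimes> f" by (auto simp: I_def)
    then have "x - y = (p1 - p2) \<otimes> z + (q1 - q2) \<otimes> f" by (simp add: ml algebra_simps)
    then show "x - y \<in> I" by (auto simp: I_def)
  qed
  have lm: "\<forall>x\<in>I. \<forall>r. r \<otimes> x \<in> I"
  proof (intro ballI allI)
    fix x r assume "x \<in> I"
    then obtain p q where "x = p \<otimes> z + q \<otimes> f" by (auto simp: I_def)
    then have "r \<otimes> x = (r \<otimes> p) \<otimes> z + (r \<otimes> q) \<otimes> f" by (simp add: mult_add_right mult_assoc)
    then show "r \<otimes> x \<in> I" by (auto simp: I_def)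
  qed
  have zI: "z \<in> I" unfolding I_def by (rule CollectI, rule exI[of _ "[:1:]"], rule exI[of _ 0]) simp
  have fI: "f \<in> I" unfolding I_def by (rule CollectI, rule exI[of _ 0], rule exI[of _ "[:1:]"]) simp
  obtain h where h: "h \<in> I" "h \<noteq> 0" "\<forall>x\<in>I. x \<noteq> 0 \<longrightarrow> degree h \<le> degree x"
    using min_elem[OF zI assms(1)] by blast
  obtain u where u: "f = u \<otimes> h" using left_ideal_gen[OF sub lm h fI] by blast
  have unz: "u \<noteq> 0" using u fnz by auto
  have "degree h \<le> degree z" using h(3) zI assms(1) by blast
  then have "degree h < m" using assms(2) by linarith
  then have "\<not> degree u < m" using irr' u by blast
  moreover have "m = degree u + degree h" using u deg_mult(1)[OF unz h(2)] by simp
  ultimately have "degree h = 0" by simp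
  then obtain c where c: "h = [:c:]" by (meson degree_eq_zeroE)
  then have "c \<noteq> 0" using h(2) by simp
  then have "L (inverse c) [:c:] = [:1:]" by (intro poly_eqI) (simp add: coeff_L coeff_pCons')
  then have "[:inverse c:] \<otimes> h = [:1:]" using c by (simp add: mult_const)
  then have "[:1:] \<in> I" using lm h(1) by metis
  then show ?thesis by (auto simp: I_def)
qed

end


context skewf begin

lemma RZ:
  assumes yV: "y \<in> V m" and zV: "z \<in> V m" and ynz: "y \<noteq> 0" and znz: "z \<noteq> 0"
  shows "rmod (y \<otimes> z) \<noteq> 0"
proof
  assume yz: "rmod (y \<otimes> z) = 0"
  define A where "A = {w. rmod (w \<otimes> z) = 0}"
  have sub: "\<forall>x\<in>A. \<forall>y\<in>A. x - y \<in> A"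
    by (simp add: A_def ml(1) rmod_d(1))
  have lm: "\<forall>x\<in>A. \<forall>r. r \<otimes> x \<in> A"
    by (simp add: A_def mult_assoc rmod_left)
  have yA: "y \<in> A" using yz by (simp add: A_def)
  obtain h where h: "h \<in> A" "h \<noteq> 0" "\<forall>x\<in>A. x \<noteq> 0 \<longrightarrow> degree h \<le> degree x"
    using min_elem[OF yA ynz] by blast
  have hz: "rmod (h \<otimes> z) = 0" using h(1) by (simp add: A_def)
  have "degree h \<le> degree y" using h(3) yA ynz by blast
  moreover have "degree y < m" using yV V_iff mpos by blast
  ultimately have hm: "degree h < m" by linarith
  have zd: "degree z < m" using zV V_iff mpos by blast
  obtain P Q where PQ: "[:1:] = P \<otimes> z + Q \<otimes> f" using bezout[OF znz zd] by blast
  define \<phi> where "\<phi> w = rmod (w \<otimes> z)" for w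
  have lin: "lin \<phi>"
    by (simp add: lin_def \<phi>_def mult_add_left rmod_add mult_L_left rmod_L)
  have "\<forall>i<m. \<exists>u\<in>V (degree h). \<phi> u = monom 1 i"
  proof (intro allI impI)
    fix i assume i: "i < m"
    let ?b = "monom (1::'a) i"
    obtain W r where Wr: "?b \<otimes> P = W \<otimes> h + r" "r = 0 \<or> degree r < degree h"
      using rdiv[OF h(2)] by blast
    have rV: "r \<in> V (degree h)" using Wr(2) by (rule V_I)
    have "r = ?b \<otimes> P - W \<otimes> h" using Wr(1) by simp
    then have "r \<otimes> z = (?b \<otimes> P) \<otimes> z - W \<otimes> (h \<otimes> z)"
      by (simp add: ml(1) mult_assoc)
    then have "\<phi> r = rmod (?b \<otimes> (P \<otimes> z)) - rmod (W \<otimes> (h \<otimes> z))"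
      by (simp add: \<phi>_def rmod_d(1) mult_assoc)
    also have "rmod (W \<otimes> (h \<otimes> z)) = 0" using hz by (rule rmod_left)
    also have "P \<otimes> z = [:1:] - Q \<otimes> f" using PQ by (simp add: algebra_simps)
    also have "?b \<otimes> ([:1:] - Q \<otimes> f) = ?b - (?b \<otimes> Q) \<otimes> f"
      by (simp add: mr(1) mult_assoc)
    also have "rmod (?b - (?b \<otimes> Q) \<otimes> f) = ?b"
      using i by (simp add: rmod_d(1) rmod_qf rmod_small degree_monom_eq)
    finally show "\<exists>u\<in>V (degree h). \<phi> u = ?b" using rV by auto
  qed
  from DIM1[OF lin this] hm show False by simp
qed

lemma R_bij:
  assumes aV: "a \<in> V m" and anz: "a \<noteq> 0"
  shows "bij_betw (\<lambda>x. rmod (x \<otimes> a)) (V m) (V m)"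
proof -
  define \<phi> where "\<phi> w = rmod (w \<otimes> a)" for w
  have lin: "lin \<phi>"
    by (simp add: lin_def \<phi>_def mult_add_left rmod_add mult_L_left rmod_L)
  have inj0: "\<forall>x\<in>V m. \<phi> x = 0 \<longrightarrow> x = 0" using RZ aV anz by (auto simp: \<phi>_def)
  have "inj_on \<phi> (V m)"
  proof (rule inj_onI)
    fix x y assume xy: "x \<in> V m" "y \<in> V m" "\<phi> x = \<phi> y"
    then have "\<phi> (x - y) = 0" by (simp add: \<phi>_def ml(1) rmod_d(1))
    moreover have "x - y \<in> V m" using xy by (simp add: V_def)
    ultimately show "x = y" using inj0 by auto
  qed
  moreover have "\<phi> ` V m = V m"
  proof
    show "\<phi> ` V m \<subseteq> V m" by (auto simp: \<phi>_def rmod_V)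
    show "V m \<subseteq> \<phi> ` V m"
    proof
      fix b :: "'a poly" assume "b \<in> V m"
      from DIM2[OF lin _ inj0 this] obtain x where "x \<in> V m" "\<phi> x = b" by (auto simp: \<phi>_def rmod_V)
      then show "b \<in> \<phi> ` V m" by blast
    qed
  qed
  ultimately show ?thesis unfolding bij_betw_def \<phi>_def by simp
qed

lemma L_inj:
  assumes aV: "a \<in> V m" and anz: "a \<noteq> 0"
  shows "inj_on (\<lambda>x. rmod (a \<otimes> x)) (V m)"
proof (rule inj_onI)
  fix x y assume xy: "x \<in> V m" "y \<in> V m" "rmod (a \<otimes> x) = rmod (a \<otimes> y)"
  then have "rmod (a \<otimes> (x - y)) = 0" by (simp add: mr(1) rmod_d(1))
  moreover have "x - y \<in> V m" using xy by (simp add: V_def)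
  ultimately show "x = y" using RZ[OF aV _ anz] by (metis eq_iff_diff_eq_0)
qed

lemma L_strip:
  assumes aV: "a \<in> V m" and anz: "a \<noteq> 0" and z: "rmod (a \<otimes> y) = 0"
  shows "rmod y = 0"
proof -
  have "rmod (a \<otimes> rmod y) = 0" using z by (simp add: rmod_mult_right)
  then show ?thesis using RZ[OF aV rmod_V anz] by auto
qed

definition spow where "spow a n = ((\<lambda>x. x \<otimes> a) ^^ n) [:1:]"

lemma spow_0: "spow a 0 = [:1:]" by (simp add: spow_def)
lemma spow_Suc: "spow a (Suc n) = spow a n \<otimes> a" by (simp add: spow_def)
lemma spow_Suc': "spow a (Suc n) = a \<otimes> spow a n"
proof (induction n)
  case 0 then show ?case by (simp add: spow_Suc spow_0)
next
  case (Suc n)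
  have "spow a (Suc (Suc n)) = (a \<otimes> spow a n) \<otimes> a" using Suc by (simp add: spow_Suc)
  also have "\<dots> = a \<otimes> spow a (Suc n)" by (simp add: mult_assoc spow_Suc)
  finally show ?case .
qed

lemma strip_pow:
  assumes aV: "a \<in> V m" and anz: "a \<noteq> 0"
  shows "rmod (spow a n \<otimes> y) = 0 \<Longrightarrow> rmod y = 0"
proof (induction n arbitrary: y)
  case 0 then show ?case by (simp add: spow_0)
next
  case (Suc n)
  have "rmod (a \<otimes> (spow a n \<otimes> y)) = 0" using Suc.prems by (simp add: spow_Suc' mult_assoc)
  then have "rmod (spow a n \<otimes> y) = 0" using L_strip[OF aV anz] by blast
  then show ?case using Suc.IH by blast
qed

lemma bounded_surj:
  assumes "skew_bounded \<sigma> \<delta> f"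
  shows "surj \<sigma>"
proof -
  obtain fs where fs: "fs \<noteq> 0" "skew_left_ideal_gen \<sigma> \<delta> fs = skew_right_ideal_gen \<sigma> \<delta> fs"
     "skew_left_ideal_gen \<sigma> \<delta> fs \<subseteq> skew_left_ideal_gen \<sigma> \<delta> f"
    using assms by (auto simp: skew_bounded_def)
  have inL: "g \<otimes> fs \<in> skew_left_ideal_gen \<sigma> \<delta> fs" for g by (auto simp: skew_left_ideal_gen_def)
  have lcnz: "lead_coeff fs \<noteq> 0" using fs(1) by simp
  show ?thesis
  proof (cases "degree fs = 0")
    case True
    then obtain c where c: "fs = [:c:]" by (meson degree_eq_zeroE)
    then have cnz: "c \<noteq> 0" using fs(1) by simp
    have "L (inverse c) [:c:] = [:1:]" using cnz by (intro poly_eqI) (simp add: coeff_L coeff_pCons')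
    then have "[:inverse c:] \<otimes> fs = [:1:]" using c by (simp add: mult_const)
    then have "[:1:] \<in> skew_left_ideal_gen \<sigma> \<delta> f" using inL fs(3) by (metis subsetD)
    then obtain q where q: "[:1:] = q \<otimes> f" by (auto simp: skew_left_ideal_gen_def)
    then have "q \<noteq> 0" by auto
    then have "degree (q \<otimes> f) \<ge> 2" using deg_mult(1)[OF _ fnz] deg2 by simp
    with q show ?thesis by (metis degree_pCons_0 not_numeral_le_zero)
  next
    case False
    then obtain k where k: "degree fs = Suc k" using not0_implies_Suc by blast
    show ?thesis
    proof (rule surjI[where f = "\<lambda>e. (\<sigma> ^^ k) (SOME b. (\<sigma> ^^ degree fs) b = e)"])
      fix e
      show "\<sigma> ((\<sigma> ^^ k) (SOME b. (\<sigma> ^^ degree fs) b = e)) = e"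
      proof (cases "e = 0")
        case True
        then have "(\<sigma> ^^ degree fs) 0 = e" by simp
        then have "(\<sigma> ^^ degree fs) (SOME b. (\<sigma> ^^ degree fs) b = e) = e" by (rule someI)
        then show ?thesis using k by (simp del: funpow.simps add: funpow_Suc_right[symmetric]) (simp add: k)
      next
        case enz: False
        define d where "d = lead_coeff fs * e * inverse (lead_coeff fs)"
        have dnz: "d \<noteq> 0" using enz lcnz by (simp add: d_def)
        have "[:d:] \<otimes> fs \<in> skew_right_ideal_gen \<sigma> \<delta> fs" using inL fs(2) by blast
        then obtain w where w: "L d fs = fs \<otimes> w" by (auto simp: skew_right_ideal_gen_def mult_const)
        have cL: "coeff (L d fs) (degree fs) = d * lead_coeff fs" by (simp add: coeff_L)
        then have "coeff (L d fs) (degree fs) \<noteq> 0" using dnz lcnz by simp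
        then have dL: "degree (L d fs) = degree fs" using degree_L[of d fs] le_degree by (metis antisym)
        have wnz: "w \<noteq> 0" using w dL \<open>coeff (L d fs) (degree fs) \<noteq> 0\<close> by auto
        have "degree (fs \<otimes> w) = degree fs + degree w" by (rule deg_mult(1)[OF fs(1) wnz])
        then have dw: "degree w = 0" using w dL by simp
        have "lead_coeff (fs \<otimes> w) = lead_coeff fs * (\<sigma> ^^ degree fs) (lead_coeff w)" by (rule deg_mult(2)[OF fs(1) wnz])
        moreover have "lead_coeff (fs \<otimes> w) = d * lead_coeff fs" using w dL cL by simp
        moreover have "d * lead_coeff fs = lead_coeff fs * e" using lcnz by (simp add: d_def mult.assoc)
        ultimately have "lead_coeff fs * (\<sigma> ^^ degree fs) (lead_coeff w) = lead_coeff fs * e" by metis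
        then have "(\<sigma> ^^ degree fs) (lead_coeff w) = e" using lcnz by (metis mult_left_cancel)
        then have "(\<sigma> ^^ degree fs) (SOME b. (\<sigma> ^^ degree fs) b = e) = e" by (rule someI)
        then show ?thesis using k by (simp del: funpow.simps add: funpow_Suc_right[symmetric]) (simp add: k)
      qed
    qed
  qed
qed

end


context skewf begin

lemma L_surj:
  assumes bd: "skew_bounded \<sigma> \<delta> f" and aV: "a \<in> V m" and anz: "a \<noteq> 0" and bV: "b \<in> V m"
  shows "\<exists>x\<in>V m. rmod (a \<otimes> x) = b"
proof -
  have su: "surj \<sigma>" using bounded_surj[OF bd] .
  obtain fs where fs: "fs \<noteq> 0" "skew_left_ideal_gen \<sigma> \<delta> fs = skew_right_ideal_gen \<sigma> \<delta> fs"
     "skew_left_ideal_gen \<sigma> \<delta> fs \<subseteq> skew_left_ideal_gen \<sigma> \<delta> f"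
    using bd by (auto simp: skew_bounded_def)
  have fsR: "rmod (fs \<otimes> s) = 0" for s
  proof -
    have "fs \<otimes> s \<in> skew_right_ideal_gen \<sigma> \<delta> fs" by (auto simp: skew_right_ideal_gen_def)
    then have "fs \<otimes> s \<in> skew_left_ideal_gen \<sigma> \<delta> f" using fs(2,3) by blast
    then obtain q where "fs \<otimes> s = q \<otimes> f" by (auto simp: skew_left_ideal_gen_def)
    then show ?thesis by (simp add: rmod_qf)
  qed
  define J where "J n = {spow a n \<otimes> r + fs \<otimes> s | r s. True}" for n
  have sub: "\<forall>x\<in>J n. \<forall>y\<in>J n. x - y \<in> J n" for n
  proof (intro ballI)
    fix x y assume "x \<in> J n" "y \<in> J n"
    then obtain r1 s1 r2 s2 where "x = spow a n \<otimes> r1 + fs \<otimes> s1" "y = spow a n \<otimes> r2 + fs \<otimes> s2"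
      by (auto simp: J_def)
    then have "x - y = spow a n \<otimes> (r1 - r2) + fs \<otimes> (s1 - s2)" by (simp add: mr(1) algebra_simps)
    then show "x - y \<in> J n" by (auto simp: J_def)
  qed
  have rm: "\<forall>x\<in>J n. \<forall>w. x \<otimes> w \<in> J n" for n
  proof (intro ballI allI)
    fix x w assume "x \<in> J n"
    then obtain r s where "x = spow a n \<otimes> r + fs \<otimes> s" by (auto simp: J_def)
    then have "x \<otimes> w = spow a n \<otimes> (r \<otimes> w) + fs \<otimes> (s \<otimes> w)" by (simp add: mult_add_left mult_assoc)
    then show "x \<otimes> w \<in> J n" by (auto simp: J_def)
  qed
  have fsJ: "fs \<in> J n" for n
    unfolding J_def by (rule CollectI, rule exI[of _ 0], rule exI[of _ "[:1:]"]) simp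
  have desc: "J (Suc n) \<subseteq> J n" for n
  proof
    fix x assume "x \<in> J (Suc n)"
    then obtain r s where "x = spow a (Suc n) \<otimes> r + fs \<otimes> s" by (auto simp: J_def)
    then have "x = spow a n \<otimes> (a \<otimes> r) + fs \<otimes> s" by (simp add: spow_Suc mult_assoc)
    then show "x \<in> J n" by (auto simp: J_def)
  qed
  define d where "d n = (LEAST k. \<exists>x\<in>J n. x \<noteq> 0 \<and> degree x = k)" for n
  have dex: "\<exists>x\<in>J n. x \<noteq> 0 \<and> degree x = d n" for n
    unfolding d_def by (rule LeastI_ex) (use fsJ fs(1) in blast)
  have dle: "x \<in> J n \<Longrightarrow> x \<noteq> 0 \<Longrightarrow> d n \<le> degree x" for x n
    unfolding d_def by (rule Least_le) blast
  have dmono: "d n \<le> d (Suc n)" for n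
  proof -
    obtain x where x: "x \<in> J (Suc n)" "x \<noteq> 0" "degree x = d (Suc n)" using dex by blast
    have "x \<in> J n" using x(1) desc by blast
    from dle[OF this x(2)] x(3) show ?thesis by simp
  qed
  have dfs: "d n \<le> degree fs" for n using dle fsJ fs(1) by blast
  have "\<exists>n. d n = d (Suc n)"
  proof (rule ccontr)
    assume "\<not> ?thesis"
    then have lt: "d n < d (Suc n)" for n using dmono[of n] by (simp add: order_le_neq_trans)
    have "n \<le> d n" for n
    proof (induction n)
      case (Suc n) then show ?case using lt[of n] by simp
    qed simp
    then show False using dfs[of "Suc (degree fs)"] \<open>\<And>n. n \<le> d n\<close>[of "Suc (degree fs)"] by linarith
  qed
  then obtain n where dn: "d n = d (Suc n)" by blast
  obtain g where g: "g \<in> J n" "g \<noteq> 0" "degree g = d n" using dex by blast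
  obtain g' where g': "g' \<in> J (Suc n)" "g' \<noteq> 0" "degree g' = d (Suc n)" using dex by blast
  have gmin: "\<forall>x\<in>J n. x \<noteq> 0 \<longrightarrow> degree g \<le> degree x" using g dle by simp
  obtain u where u: "g' = g \<otimes> u" using right_ideal_gen[OF su sub rm g(1,2) gmin] g'(1) desc by blast
  have unz: "u \<noteq> 0" using u g' by auto
  have "degree g' = degree g + degree u" using u deg_mult(1)[OF g(2) unz] by simp
  then have "degree u = 0" using g g' dn by simp
  then obtain c where c: "u = [:c:]" by (meson degree_eq_zeroE)
  then have cnz: "c \<noteq> 0" using unz by simp
  have "L c [:inverse c:] = [:1:]" using cnz by (intro poly_eqI) (simp add: coeff_L coeff_pCons')
  then have "[:c:] \<otimes> [:inverse c:] = [:1:]" by (simp add: mult_const)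
  then have "g' \<otimes> [:inverse c:] = g" using u c by (simp add: mult_assoc)
  moreover have "g' \<otimes> [:inverse c:] \<in> J (Suc n)" using rm g'(1) by blast
  ultimately have gJ: "g \<in> J (Suc n)" by simp
  have "spow a n \<otimes> b \<in> J n"
    unfolding J_def by (rule CollectI, rule exI[of _ b], rule exI[of _ 0]) simp
  then obtain w where "spow a n \<otimes> b = g \<otimes> w" using right_ideal_gen[OF su sub rm g(1,2) gmin] by blast
  moreover have "g \<otimes> w \<in> J (Suc n)" using rm gJ by blast
  ultimately have "spow a n \<otimes> b \<in> J (Suc n)" by simp
  then obtain y s where ys: "spow a n \<otimes> b = spow a (Suc n) \<otimes> y + fs \<otimes> s" by (auto simp: J_def)
  have "spow a n \<otimes> (b - a \<otimes> y) = spow a n \<otimes> b - spow a (Suc n) \<otimes> y"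
    by (simp add: mr(1) spow_Suc mult_assoc)
  also have "\<dots> = fs \<otimes> s" using ys by simp
  finally have "rmod (spow a n \<otimes> (b - a \<otimes> y)) = 0" using fsR by simp
  then have "rmod (b - a \<otimes> y) = 0" using strip_pow[OF aV anz] by blast
  then have "rmod (a \<otimes> y) = rmod b" by (simp add: rmod_d(1))
  also have "rmod b = b" using bV V_iff mpos rmod_small by blast
  finally have "rmod (a \<otimes> rmod y) = b" by (simp add: rmod_mult_right)
  then show ?thesis using rmod_V by blast
qed

lemma division_if_bounded:
  assumes bd: "skew_bounded \<sigma> \<delta> f"
  shows "Sf_division_algebra \<sigma> \<delta> f"
  unfolding Sf_division_algebra_def Sf_mult_def carrier_V
proof (intro ballI impI conjI)
  fix a :: "'a poly" assume aV: "a \<in> V m" and anz: "a \<noteq> 0"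
  show "bij_betw (\<lambda>x. rmod (x \<otimes> a)) (V m) (V m)" by (rule R_bij[OF aV anz])
  show "bij_betw (\<lambda>x. rmod (a \<otimes> x)) (V m) (V m)"
    unfolding bij_betw_def
  proof
    show "inj_on (\<lambda>x. rmod (a \<otimes> x)) (V m)" by (rule L_inj[OF aV anz])
    show "(\<lambda>x. rmod (a \<otimes> x)) ` V m = V m"
    proof
      show "(\<lambda>x. rmod (a \<otimes> x)) ` V m \<subseteq> V m" using rmod_V by blast
      show "V m \<subseteq> (\<lambda>x. rmod (a \<otimes> x)) ` V m"
      proof
        fix b :: "'a poly" assume "b \<in> V m"
        then obtain x where "x \<in> V m" "rmod (a \<otimes> x) = b" using L_surj[OF bd aV anz] by blast
        then show "b \<in> (\<lambda>x. rmod (a \<otimes> x)) ` V m" by blast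
      qed
    qed
  qed
qed

end


context skewf begin

lemma monom_mult: "monom 1 k \<otimes> monom 1 j = monom 1 (k + j)"
  by (simp add: mult_monom Tn_monom1)

lemma fd:
  assumes nuc: "[:d:] \<in> Sf_nuc_r \<sigma> \<delta> f"
  shows "rmod (f \<otimes> [:d:]) = 0"
proof -
  let ?y = "monom (1::'a) (m - 1)" and ?z = "monom (1::'a) 1" and ?t = "monom (1::'a) m"
  have yC: "?y \<in> Sf_carrier f" using deg2 by (simp add: Sf_carrier_def degree_monom_eq)
  have zC: "?z \<in> Sf_carrier f" using deg2 by (simp add: Sf_carrier_def degree_monom_eq)
  from nuc yC zC have eq: "Sf_mult \<sigma> \<delta> f (Sf_mult \<sigma> \<delta> f ?y ?z) [:d:] = Sf_mult \<sigma> \<delta> f ?y (Sf_mult \<sigma> \<delta> f ?z [:d:])"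
    by (auto simp: Sf_nuc_r_def)
  have yz: "?y \<otimes> ?z = ?t" using deg2 by (simp add: monom_mult)
  have "degree (?t - f) < m \<or> ?t - f = 0"
    using lower[of ?t m f] monic by (auto simp: degree_monom_eq)
  then have dtf: "degree (?t - f) < m" using mpos by auto
  have rt: "rmod ?t = ?t - f" by (rule rmod_eq[of _ "[:1:]"]) (use dtf in simp_all)
  have "degree (?z \<otimes> [:d:]) \<le> 1" using degree_mult_le[of ?z "[:d:]"] degree_monom_le[of "1::'a" 1] by simp
  then have rz: "rmod (?z \<otimes> [:d:]) = ?z \<otimes> [:d:]" using deg2 by (intro rmod_small) simp
  have yz': "Sf_mult \<sigma> \<delta> f ?y ?z = ?t - f" by (simp only: Sf_mult_def yz rt)
  have "Sf_mult \<sigma> \<delta> f (Sf_mult \<sigma> \<delta> f ?y ?z) [:d:] = rmod (?t \<otimes> [:d:]) - rmod (f \<otimes> [:d:])"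
    unfolding yz' by (simp add: Sf_mult_def ml(1) rmod_d(1))
  moreover have "Sf_mult \<sigma> \<delta> f ?y (Sf_mult \<sigma> \<delta> f ?z [:d:]) = rmod (?t \<otimes> [:d:])"
    by (simp only: Sf_mult_def rz mult_assoc[symmetric] yz)
  ultimately show ?thesis using eq by simp
qed

lemma Rf_const:
  assumes fdall: "\<forall>d. rmod (f \<otimes> [:d:]) = 0" and x: "rmod x = 0"
  shows "rmod (x \<otimes> [:e:]) = 0"
proof -
  obtain q where q: "x = q \<otimes> f" using x inRf by blast
  have "rmod (q \<otimes> (f \<otimes> [:e:])) = 0" using fdall rmod_left by blast
  then show ?thesis using q by (simp add: mult_assoc)
qed

lemma coords:
  assumes su: "surj \<sigma>" and fdall: "\<forall>d. rmod (f \<otimes> [:d:]) = 0"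
    and xj: "\<forall>j<m. rmod (x \<otimes> monom 1 j) = 0"
  shows "rmod (x \<otimes> r) = 0"
proof -
  have "\<forall>r\<in>V n. rmod (x \<otimes> r) = 0" if "n \<le> m" for n
    using that
  proof (induction n)
    case 0
    show ?case
    proof
      fix r :: "'a poly" assume "r \<in> V 0"
      then have "r = 0" by (simp add: V_def poly_eq_iff)
      then show "rmod (x \<otimes> r) = 0" by (simp add: rmod_d(2))
    qed
  next
    case (Suc n)
    show ?case
    proof
      fix r :: "'a poly" assume rV: "r \<in> V (Suc n)"
      obtain e where e: "(\<sigma> ^^ n) e = coeff r n" using surj_pow[OF su] by blast
      define s where "s = monom 1 n \<otimes> [:e:]"
      have s: "s = (T ^^ n) [:e:]" by (simp add: s_def mult_monom)
      have cs: "coeff s n = (\<sigma> ^^ n) e"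
      proof (cases "e = 0")
        case True then show ?thesis by (simp add: s)
      next
        case False
        then have "[:e:] \<noteq> 0" by simp
        from Tn_lead[OF this, of n] show ?thesis by (simp add: s)
      qed
      have sV: "s \<in> V (Suc n)"
        unfolding V_def using degree_Tn_le[of n "[:e:]"] by (auto simp: s intro!: coeff_eq_0)
      have rsV: "r - s \<in> V n"
        unfolding V_def mem_Collect_eq
      proof (intro allI impI)
        fix i assume "n \<le> i"
        then show "coeff (r - s) i = 0"
          using rV sV cs e by (cases "i = n") (auto simp: V_def)
      qed
      have "x \<otimes> r = (x \<otimes> monom 1 n) \<otimes> [:e:] + x \<otimes> (r - s)"
        by (simp add: mult_assoc s_def mr(1))
      moreover have "rmod ((x \<otimes> monom 1 n) \<otimes> [:e:]) = 0"
        using Rf_const[OF fdall] xj Suc.prems by simp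
      moreover have "rmod (x \<otimes> (r - s)) = 0" using Suc.IH Suc.prems rsV by simp
      ultimately show "rmod (x \<otimes> r) = 0" by (simp add: rmod_add)
    qed
  qed
  then have "rmod (x \<otimes> rmod r) = 0" using rmod_V by blast
  then show ?thesis by (simp add: rmod_mult_right)
qed

lemma exists_x: "\<exists>x. x \<noteq> 0 \<and> (\<forall>j<m. rmod (x \<otimes> monom 1 j) = 0)"
proof -
  define v where "v k l = (if l < m * m then coeff (rmod (monom 1 (k + l div m))) (l mod m) else 0)" for k l
  have "\<forall>k\<in>{..m*m}. \<forall>l\<ge>m*m. v k l = 0" by (simp add: v_def)
  from LA[OF _ _ this] obtain c where
    c: "\<exists>k\<in>{..m*m}. c k \<noteq> 0" "\<forall>l. (\<Sum>k\<in>{..m*m}. c k * v k l) = 0" by auto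
  define x where "x = (\<Sum>k\<in>{..m*m}. L (c k) (monom 1 k))"
  have xnz: "x \<noteq> 0"
  proof
    assume "x = 0"
    from c(1) obtain k where k: "k \<in> {..m*m}" "c k \<noteq> 0" by blast
    have "coeff x k = c k" unfolding x_def using k by (intro coeff_comb_monom) auto
    with k \<open>x = 0\<close> show False by simp
  qed
  have "rmod (x \<otimes> monom 1 j) = 0" if j: "j < m" for j
  proof -
    have "x \<otimes> monom 1 j = (\<Sum>k\<in>{..m*m}. L (c k) (monom 1 (k + j)))"
      by (simp add: x_def mult_sum_left mult_L_left monom_mult)
    then have e: "rmod (x \<otimes> monom 1 j) = (\<Sum>k\<in>{..m*m}. L (c k) (rmod (monom 1 (k + j))))"
      by (simp add: rmod_sum rmod_L)
    show ?thesis
    proof (rule poly_eqI)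
      fix i
      show "coeff (rmod (x \<otimes> monom 1 j)) i = coeff 0 i"
      proof (cases "i < m")
        case True
        have lt: "j * m + i < m * m"
        proof -
          have "j * m + i < Suc j * m" using True by simp
          also have "\<dots> \<le> m * m" using j by (intro mult_le_mono1) simp
          finally show ?thesis .
        qed
        have dv: "(j * m + i) div m = j" "(j * m + i) mod m = i" using True by simp_all
        have "coeff (rmod (x \<otimes> monom 1 j)) i = (\<Sum>k\<in>{..m*m}. c k * v k (j * m + i))"
          using True by (simp add: e coeff_sum coeff_L v_def lt dv)
        then show ?thesis using c(2) by simp
      next
        case False
        then show ?thesis using rmod_deg[of "x \<otimes> monom 1 j"] by (simp add: coeff_eq_0)
      qed
    qed
  qed
  with xnz show ?thesis by blast
qed

lemma bounded_i:
  assumes su: "surj \<sigma>" and fdall: "\<forall>d. rmod (f \<otimes> [:d:]) = 0"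
  shows "skew_bounded \<sigma> \<delta> f"
proof -
  define I where "I = {x. \<forall>r. rmod (x \<otimes> r) = 0}"
  obtain x0 where x0: "x0 \<noteq> 0" "\<forall>j<m. rmod (x0 \<otimes> monom 1 j) = 0" using exists_x by blast
  have x0I: "x0 \<in> I" using coords[OF su fdall x0(2)] by (simp add: I_def)
  have sub: "\<forall>x\<in>I. \<forall>y\<in>I. x - y \<in> I" by (simp add: I_def ml(1) rmod_d(1))
  have lm: "\<forall>x\<in>I. \<forall>s. s \<otimes> x \<in> I" by (simp add: I_def mult_assoc rmod_left)
  have rm: "\<forall>x\<in>I. \<forall>w. x \<otimes> w \<in> I" by (simp add: I_def mult_assoc)
  obtain g where g: "g \<in> I" "g \<noteq> 0" "\<forall>x\<in>I. x \<noteq> 0 \<longrightarrow> degree g \<le> degree x"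
    using min_elem[OF x0I x0(1)] by blast
  have Lg: "skew_left_ideal_gen \<sigma> \<delta> g = I"
  proof
    show "skew_left_ideal_gen \<sigma> \<delta> g \<subseteq> I" using lm g(1) by (auto simp: skew_left_ideal_gen_def)
    show "I \<subseteq> skew_left_ideal_gen \<sigma> \<delta> g"
      using left_ideal_gen[OF sub lm g] by (auto simp: skew_left_ideal_gen_def)
  qed
  have Rg: "skew_right_ideal_gen \<sigma> \<delta> g = I"
  proof
    show "skew_right_ideal_gen \<sigma> \<delta> g \<subseteq> I" using rm g(1) by (auto simp: skew_right_ideal_gen_def)
    show "I \<subseteq> skew_right_ideal_gen \<sigma> \<delta> g"
      using right_ideal_gen[OF su sub rm g] by (auto simp: skew_right_ideal_gen_def)
  qed
  have IRf: "I \<subseteq> skew_left_ideal_gen \<sigma> \<delta> f"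
  proof
    fix x assume "x \<in> I"
    then have "rmod (x \<otimes> [:1:]) = 0" unfolding I_def by blast
    then obtain q where "x = q \<otimes> f" using inRf by auto
    then show "x \<in> skew_left_ideal_gen \<sigma> \<delta> f" by (auto simp: skew_left_ideal_gen_def)
  qed
  have maxl: "J \<subseteq> I" if "skew_two_sided_ideal \<sigma> \<delta> J" "J \<subseteq> skew_left_ideal_gen \<sigma> \<delta> f" for J
  proof
    fix x assume xJ: "x \<in> J"
    show "x \<in> I" unfolding I_def
    proof (intro CollectI allI)
      fix r
      have "x \<otimes> r \<in> J" using that(1) xJ by (simp add: skew_two_sided_ideal_def)
      then have "x \<otimes> r \<in> skew_left_ideal_gen \<sigma> \<delta> f" using that(2) by blast
      then obtain q where "x \<otimes> r = q \<otimes> f" by (auto simp: skew_left_ideal_gen_def)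
      then show "rmod (x \<otimes> r) = 0" by (simp add: rmod_qf)
    qed
  qed
  show ?thesis unfolding skew_bounded_def
    by (rule exI[of _ g]) (use g(2) Lg Rg IRf maxl in auto)
qed

end

theorem mainTheorem10:
  fixes \<sigma> \<delta> :: "'a::division_ring \<Rightarrow> 'a" and f :: "'a poly"
  assumes "ring_endo \<sigma>" and "left_sigma_derivation \<sigma> \<delta>"
    and "lead_coeff f = 1" and "degree f \<ge> 2"
    and "skew_irreducible \<sigma> \<delta> f"
  shows "(surj \<sigma> \<and> Sf_nuc_r \<sigma> \<delta> f = range (\<lambda>a. [:a:]) \<longrightarrow>
            skew_bounded \<sigma> \<delta> f \<and> Sf_division_algebra \<sigma> \<delta> f)
       \<and> (skew_bounded \<sigma> \<delta> f \<longrightarrow> Sf_division_algebra \<sigma> \<delta> f)"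
proof -
  interpret S: skewf \<sigma> \<delta> f
    using assms by (simp add: skewf_def skew_def skewf_axioms_def)
  have ii: "skew_bounded \<sigma> \<delta> f \<longrightarrow> Sf_division_algebra \<sigma> \<delta> f"
    using S.division_if_bounded by blast
  have i: "surj \<sigma> \<and> Sf_nuc_r \<sigma> \<delta> f = range (\<lambda>a. [:a:]) \<longrightarrow> skew_bounded \<sigma> \<delta> f"
  proof
    assume h: "surj \<sigma> \<and> Sf_nuc_r \<sigma> \<delta> f = range (\<lambda>a. [:a:])"
    have "\<forall>d. skew_rmod \<sigma> \<delta> (skew_mult \<sigma> \<delta> f [:d:]) f = 0"
      using S.fd h by auto
    then show "skew_bounded \<sigma> \<delta> f" using S.bounded_i h by blast
  qed
  show ?thesis using i ii by blast
qed


end
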